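(* $$\sum_{n=1}^\infty \frac{H_n \binom{2n}{n}}{n(n+1)^2\, 2^{2n}} = \frac{2\pi^2}{3} + 4(\log 2)^2 - 12\log 2.$$
   Context: $H_n=\sum_{k=1}^n \frac{1}{k}$ denotes the $n$-th harmonic number and $\binom{2n}{n}$ the central binomial coefficient; $\log$ is the natural logarithm. *)

theory Defs
  imports "HOL-Analysis.Analysis"
begin

end

theory Submission
  imports Defs "HOL-Real_Asymp.Real_Asymp"
begin

definition cc :: "nat \<Rightarrow> real" where "cc n = real (2*n choose n) / 4^n"
definition aA :: "nat \<Rightarrow> real" where "aA n = cc n * harm n"
definition aF :: "nat \<Rightarrow> real" where "aF n = aA n / real n"
definition aB :: "nat \<Rightarrow> real" where "aB n = aA n / (real n + 1)"
definition aK :: "nat \<Rightarrow> real" where "aK n = aA n / (real n + 1)^2"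
definition l1 :: "nat \<Rightarrow> real" where "l1 n = 1 / real n"
definition l2 :: "nat \<Rightarrow> real" where "l2 n = 1 / (real n)^2"
definition PS :: "(nat \<Rightarrow> real) \<Rightarrow> real \<Rightarrow> real" where "PS a x = (\<Sum>n. a n * x^n)"

lemma cb_nat: "(Suc n) * (2*Suc n choose Suc n) = 2*(2*n+1)*(2*n choose n)"
  by (metis Suc_eq_plus1 Suc_times_binomial Suc_times_binomial_add
    add_2_eq_Suc add_mult_distrib mult_Suc_right nat_mult_1 one_add_one)

lemma cc_rec: "real (Suc n) * cc (Suc n) = (real n + 1/2) * cc n"
proof -
  define B where "B = (2*Suc n choose Suc n)"
  define C where "C = (2*n choose n)"
  have "real (Suc n * B) = real (2*(2*n+1)*C)" unfolding B_def C_def using cb_nat by metis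
  then have "real (Suc n) * real B = real (2*(2*n+1)) * real C" by (metis of_nat_mult)
  then have h: "real (Suc n) * real B = 2*(2*real n+1)*real C" by simp
  have "cc (Suc n) = real B / 4^Suc n" by (simp only: cc_def B_def)
  moreover have "cc n = real C / 4^n" by (simp only: cc_def C_def)
  ultimately have "real (Suc n) * cc (Suc n) = (real (Suc n) * real B) / 4^Suc n \<and> cc n = real C / 4^n" by simp
  then have "real (Suc n) * cc (Suc n) = 2*(2*real n+1)*real C / (4*4^n) \<and> cc n = real C / 4^n" using h by simp
  then have e1: "real (Suc n) * cc (Suc n) = 2*(2*real n+1)*real C / (4*4^n)" and e2: "cc n = real C/4^n" by auto
  show ?thesis unfolding e1 e2 by (simp add: field_simps)
qed

lemma cc_nonneg: "cc n \<ge> 0" by (simp add: cc_def)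
lemma cc_le1: "cc n \<le> 1"
proof -
  have "(2*n choose n) \<le> 2^(2*n)" by (rule binomial_le_pow2)
  also have "(2::nat)^(2*n) = 4^n" by (simp add: power_mult)
  finally have "real (2*n choose n) \<le> 4^n" by (metis of_nat_le_iff of_nat_numeral of_nat_power)
  then show ?thesis by (simp add: cc_def)
qed
lemma cc0: "cc 0 = 1" by (simp add: cc_def)

lemma harm0: "harm 0 = (0::real)" by (simp add: harm_def)

lemma harm_le: "harm n \<le> (real n :: real)"
proof (induction n)
  case 0 then show ?case by (simp add: harm0)
next
  case (Suc n)
  have "inverse (real (Suc n)) \<le> 1" by (simp add: inverse_le_1_iff)
  then show ?case using Suc by (simp add: harm_Suc)
qed

lemma aA_nonneg: "aA n \<ge> 0" by (simp add: aA_def cc_nonneg harm_nonneg)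
lemma aA_le: "aA n \<le> real n"
proof -
  have "cc n * harm n \<le> 1 * harm n" by (rule mult_right_mono[OF cc_le1 harm_nonneg])
  then show ?thesis using harm_le[of n] by (simp add: aA_def)
qed
lemma aA0: "aA 0 = 0" by (simp add: aA_def harm0)

lemma summ:
  fixes a :: "nat \<Rightarrow> real"
  assumes b: "\<And>n. \<bar>a n\<bar> \<le> M * (real n + 1)^2" and x: "\<bar>x\<bar> < 1"
  shows "summable (\<lambda>n. a n * x^n)"
proof -
  have g: "summable (\<lambda>n. (\<lambda>_. 1::real) n * y^n)" if "norm y < 1" for y
    using that by (simp add: summable_geometric)
  have g1: "summable (\<lambda>n. diffs (\<lambda>_. 1::real) n * y^n)" if "norm y < 1" for y
    by (rule termdiff_converges[OF that]) (rule g)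
  have g2: "summable (\<lambda>n. diffs (diffs (\<lambda>_. 1::real)) n * y^n)" if "norm y < 1" for y
    by (rule termdiff_converges[OF that]) (rule g1)
  have "summable (\<lambda>n. diffs (diffs (\<lambda>_. 1::real)) n * \<bar>x\<bar>^n)" using g2[of "\<bar>x\<bar>"] x by simp
  then have s: "summable (\<lambda>n. \<bar>M\<bar> * ((real n + 1) * (real n + 2) * \<bar>x\<bar>^n))"
    by (intro summable_mult) (simp add: diffs_def algebra_simps)
  show ?thesis
  proof (rule summable_comparison_test[OF _ s], intro exI allI impI)
    fix n
    have "norm (a n * x^n) = \<bar>a n\<bar> * \<bar>x\<bar>^n" by (simp add: abs_mult power_abs)
    also have "\<dots> \<le> (\<bar>M\<bar> * (real n + 1)^2) * \<bar>x\<bar>^n"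
      using b[of n] by (intro mult_right_mono) (auto intro: order.trans abs_ge_self mult_right_mono)
    also have "\<dots> \<le> \<bar>M\<bar> * ((real n + 1) * (real n + 2) * \<bar>x\<bar>^n)"
    proof -
      have "(real n + 1)^2 \<le> (real n + 1) * (real n + 2)" by (simp add: power2_eq_square)
      then have "(real n + 1)^2 * \<bar>x\<bar>^n \<le> (real n + 1) * (real n + 2) * \<bar>x\<bar>^n"
        by (intro mult_right_mono) auto
      then show ?thesis by (simp add: mult.assoc mult_left_mono)
    qed
    finally show "norm (a n * x^n) \<le> \<bar>M\<bar> * ((real n + 1) * (real n + 2) * \<bar>x\<bar>^n)" by simp
  qed
qed


lemma bnd1: "\<bar>a\<bar> \<le> 1 \<Longrightarrow> \<bar>a\<bar> \<le> 1 * (real n + 1)^2"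
proof -
  assume "\<bar>a\<bar> \<le> 1"
  moreover have "1 \<le> (real n + 1)^2" by (rule one_le_power) simp
  ultimately show ?thesis by linarith
qed

lemma aA_le_sq: "aA n \<le> (real n + 1)^2"
  using aA_le[of n] by (simp add: power2_eq_square) (smt (verit) mult_le_cancel_right1 of_nat_0_le_iff)

lemma b_cc: "\<bar>cc n\<bar> \<le> 1 * (real n + 1)^2" by (rule bnd1) (use cc_le1 cc_nonneg in auto)
lemma b_ccS: "\<bar>cc (Suc n)\<bar> \<le> 1 * (real n + 1)^2" by (rule bnd1) (use cc_le1 cc_nonneg in auto)
lemma b_aA: "\<bar>aA n\<bar> \<le> 1 * (real n + 1)^2" using aA_le_sq aA_nonneg by simp
lemma aF_nonneg: "aF n \<ge> 0" by (simp add: aF_def aA_nonneg)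
lemma aB_nonneg: "aB n \<ge> 0" by (simp add: aB_def aA_nonneg)
lemma aK_nonneg: "aK n \<ge> 0" by (simp add: aK_def aA_nonneg)
lemma div_le: "0 \<le> (a::real) \<Longrightarrow> 1 \<le> d \<Longrightarrow> a / d \<le> a"
proof -
  assume "0 \<le> a" "1 \<le> d"
  then have "a / d \<le> a / 1" by (intro divide_left_mono) auto
  then show ?thesis by simp
qed
lemma aF_le: "aF n \<le> aA n"
  by (cases n) (auto simp: aF_def aA0 aA_nonneg intro!: div_le)
lemma aB_le: "aB n \<le> aA n"
  by (auto simp: aB_def aA_nonneg intro!: div_le)
lemma aK_le: "aK n \<le> aA n"
  unfolding aK_def by (rule div_le) (auto simp: aA_nonneg intro!: one_le_power)
lemma b_aF: "\<bar>aF n\<bar> \<le> 1 * (real n + 1)^2" using aF_le[of n] aF_nonneg[of n] b_aA[of n] by simp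
lemma b_aB: "\<bar>aB n\<bar> \<le> 1 * (real n + 1)^2" using aB_le[of n] aB_nonneg[of n] b_aA[of n] by simp
lemma b_aK: "\<bar>aK n\<bar> \<le> 1 * (real n + 1)^2" using aK_le[of n] aK_nonneg[of n] b_aA[of n] by simp
lemma b_l1: "\<bar>l1 n\<bar> \<le> 1 * (real n + 1)^2" by (rule bnd1) (cases n, auto simp: l1_def)
lemma b_l2: "\<bar>l2 n\<bar> \<le> 1 * (real n + 1)^2" by (rule bnd1) (cases n, auto simp: l2_def)
lemma b_ncc: "\<bar>real n * cc n\<bar> \<le> 1 * (real n + 1)^2"
proof -
  have "\<bar>real n * cc n\<bar> \<le> real n * 1" using cc_le1[of n] cc_nonneg[of n] by (simp add: abs_mult mult_left_le)
  also have "\<dots> \<le> (real n + 1)^2"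
  proof -
    have "0 \<le> real n * real n" by simp
    then show ?thesis by (simp add: power2_eq_square algebra_simps)
  qed
  finally show ?thesis by simp
qed
lemma b_naA: "\<bar>real n * aA n\<bar> \<le> 1 * (real n + 1)^2"
proof -
  have "\<bar>real n * aA n\<bar> \<le> real n * real n" using aA_le[of n] aA_nonneg[of n] by (simp add: abs_mult mult_left_mono)
  also have "\<dots> \<le> (real n + 1)^2" unfolding power2_eq_square by (intro mult_mono) auto
  finally show ?thesis by simp
qed

lemma PS_deriv:
  assumes b: "\<And>n. \<bar>a n\<bar> \<le> M * (real n + 1)^2" and x: "\<bar>x\<bar> < 1"
  shows "(PS a has_real_derivative PS (diffs a) x) (at x)"
proof -
  have "((\<lambda>z. \<Sum>n. a n * z^n) has_real_derivative (\<Sum>n. diffs a n * x^n)) (at x)"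
    by (rule termdiffs_strong'[of 1]) (use x in \<open>auto intro: summ[OF b]\<close>)
  moreover have "PS a = (\<lambda>z. \<Sum>n. a n * z^n)" by (rule ext) (simp add: PS_def)
  ultimately show ?thesis by (simp add: PS_def)
qed

lemma summ_diffs:
  assumes b: "\<And>n. \<bar>a n\<bar> \<le> M * (real n + 1)^2" and x: "\<bar>x\<bar> < 1"
  shows "summable (\<lambda>n. diffs a n * x^n)"
  by (rule termdiff_converges[of x 1]) (use x in \<open>auto intro: summ[OF b]\<close>)

lemma x_diffs:
  assumes b: "\<And>n. \<bar>a n\<bar> \<le> M * (real n + 1)^2" and x: "\<bar>x\<bar> < 1"
  shows "x * PS (diffs a) x = PS (\<lambda>n. real n * a n) x"
proof -
  define g where "g = (\<lambda>m. real m * a m * x^m)"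
  have s: "summable (\<lambda>n. diffs a n * x^n)" by (rule summ_diffs[OF b x])
  have eq: "(\<lambda>n. diffs a n * x^n * x) = (\<lambda>n. g (Suc n))"
    by (rule ext) (simp add: g_def diffs_def algebra_simps)
  have "x * PS (diffs a) x = (\<Sum>n. diffs a n * x^n * x)"
    unfolding PS_def using suminf_mult2[OF s, of x] by (simp add: mult.commute)
  also have "\<dots> = (\<Sum>n. g (Suc n))" by (simp only: eq)
  also have "\<dots> = suminf g - g 0"
  proof (rule suminf_split_head)
    have "summable (\<lambda>n. g (Suc n))" using summable_mult2[OF s, of x] by (simp only: eq)
    then show "summable g" by (simp only: summable_Suc_iff)
  qed
  also have "\<dots> = PS (\<lambda>n. real n * a n) x" by (simp add: g_def PS_def)
  finally show ?thesis .
qed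

lemma PS_shift:
  assumes s1: "summable (\<lambda>n. a n * x^n)" and s2: "summable (\<lambda>n. a (Suc n) * x^n)"
  shows "x * PS (\<lambda>n. a (Suc n)) x = PS a x - a 0"
proof -
  have "x * PS (\<lambda>n. a (Suc n)) x = (\<Sum>n. a (Suc n) * x^n * x)"
    unfolding PS_def using suminf_mult2[OF s2, of x] by (simp add: mult.commute)
  also have "\<dots> = (\<Sum>n. (\<lambda>m. a m * x^m) (Suc n))" by (simp add: algebra_simps)
  also have "\<dots> = PS a x - a 0" using suminf_split_head[OF s1] by (simp add: PS_def)
  finally show ?thesis .
qed

lemma PS_add:
  assumes "summable (\<lambda>n. a n * x^n)" "summable (\<lambda>n. b n * x^n)"
  shows "PS (\<lambda>n. a n + b n) x = PS a x + PS b x"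
  unfolding PS_def using suminf_add[OF assms] by (simp add: distrib_right)

lemma PS_cmult: "summable (\<lambda>n. a n * x^n) \<Longrightarrow> PS (\<lambda>n. c * a n) x = c * PS a x"
  unfolding PS_def using suminf_mult[of "\<lambda>n. a n * x^n" c] by (simp add: mult.assoc)

lemma PS_zero: "PS a 0 = a 0"
  unfolding PS_def by (rule powser_zero)

lemma E0:
  assumes x: "\<bar>x\<bar> < 1"
  shows "PS (diffs cc) x = x * PS (diffs cc) x + PS cc x / 2"
proof -
  have "PS (diffs cc) x = PS (\<lambda>n. real n * cc n + (1/2) * cc n) x"
    unfolding PS_def diffs_def using cc_rec by (simp add: algebra_simps)
  also have "\<dots> = PS (\<lambda>n. real n * cc n) x + PS (\<lambda>n. (1/2) * cc n) x"
    using summ[OF b_ncc x] summable_mult[OF summ[OF b_cc x], of "1/2"]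
    by (intro PS_add) (simp_all add: mult.assoc)
  also have "PS (\<lambda>n. (1/2) * cc n) x = PS cc x / 2"
    using PS_cmult[OF summ[OF b_cc x], of "1/2"] by simp
  also have "PS (\<lambda>n. real n * cc n) x = x * PS (diffs cc) x"
    using x_diffs[OF b_cc x] by simp
  finally show ?thesis .
qed

lemma diffs_aA: "diffs aA n = real n * aA n + (1/2) * aA n + cc (Suc n)"
proof -
  have "diffs aA n = real (Suc n) * cc (Suc n) * harm n + real (Suc n) * cc (Suc n) * inverse (real (Suc n))"
    by (simp add: diffs_def aA_def harm_Suc algebra_simps)
  also have "real (Suc n) * cc (Suc n) * inverse (real (Suc n)) = cc (Suc n)" by simp
  also have "real (Suc n) * cc (Suc n) * harm n = real n * aA n + (1/2) * aA n"
    using cc_rec[of n] by (simp add: aA_def algebra_simps)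
  finally show ?thesis .
qed

lemma EA:
  assumes x: "\<bar>x\<bar> < 1"
  shows "x * PS (diffs aA) x = x * (x * PS (diffs aA) x) + x * PS aA x / 2 + PS cc x - 1"
proof -
  have sA: "summable (\<lambda>n. aA n * x^n)" by (rule summ[OF b_aA x])
  have "PS (diffs aA) x = PS (\<lambda>n. (real n * aA n + (1/2) * aA n) + cc (Suc n)) x"
    unfolding diffs_aA by simp
  also have "\<dots> = PS (\<lambda>n. real n * aA n + (1/2) * aA n) x + PS (\<lambda>n. cc (Suc n)) x"
    using summable_add[OF summ[OF b_naA x] summable_mult[OF sA, of "1/2"]] summ[OF b_ccS x]
    by (intro PS_add) (simp_all add: mult.assoc distrib_right)
  also have "PS (\<lambda>n. real n * aA n + (1/2) * aA n) x = PS (\<lambda>n. real n * aA n) x + PS (\<lambda>n. (1/2) * aA n) x"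
    using summ[OF b_naA x] summable_mult[OF sA, of "1/2"]
    by (intro PS_add) (simp_all add: mult.assoc)
  also have "PS (\<lambda>n. (1/2) * aA n) x = PS aA x / 2"
    using PS_cmult[OF sA, of "1/2"] by simp
  also have "PS (\<lambda>n. real n * aA n) x = x * PS (diffs aA) x"
    using x_diffs[OF b_aA x] by simp
  finally have e: "PS (diffs aA) x = x * PS (diffs aA) x + PS aA x / 2 + PS (\<lambda>n. cc (Suc n)) x" .
  have r: "x * PS (\<lambda>n. cc (Suc n)) x = PS cc x - 1"
    using PS_shift[OF summ[OF b_cc x] summ[OF b_ccS x]] by (simp add: cc0)
  have "x * PS (diffs aA) x = x * (x * PS (diffs aA) x + PS aA x / 2 + PS (\<lambda>n. cc (Suc n)) x)"
    using arg_cong[OF e, of "\<lambda>t. x * t"] .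
  also have "\<dots> = x * (x * PS (diffs aA) x) + x * PS aA x / 2 + x * PS (\<lambda>n. cc (Suc n)) x"
    by (simp add: algebra_simps)
  finally show ?thesis using r by linarith
qed

lemma EF:
  assumes x: "\<bar>x\<bar> < 1"
  shows "x * PS (diffs aF) x = PS aA x"
proof -
  have "x * PS (diffs aF) x = PS (\<lambda>n. real n * aF n) x" by (rule x_diffs[OF b_aF x])
  also have "(\<lambda>n. real n * aF n) = aA" by (rule ext) (auto simp: aF_def aA0)
  finally show ?thesis .
qed

lemma PS_diff:
  assumes "summable (\<lambda>n. a n * x^n)" "summable (\<lambda>n. b n * x^n)"
  shows "PS (\<lambda>n. a n - b n) x = PS a x - PS b x"
  unfolding PS_def using suminf_diff[OF assms] by (simp add: left_diff_distrib)

lemma EB: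
  assumes x: "\<bar>x\<bar> < 1"
  shows "PS aB x + x * PS (diffs aB) x = PS aA x"
proof -
  have "x * PS (diffs aB) x = PS (\<lambda>n. real n * aB n) x" by (rule x_diffs[OF b_aB x])
  also have "(\<lambda>n. real n * aB n) = (\<lambda>n. aA n - aB n)"
    by (rule ext) (simp add: aB_def field_simps)
  also have "PS (\<lambda>n. aA n - aB n) x = PS aA x - PS aB x"
    by (rule PS_diff) (auto intro!: summ[OF b_aB x] summ[OF b_aA x])
  finally show ?thesis by simp
qed

lemma EK:
  assumes x: "\<bar>x\<bar> < 1"
  shows "PS aK x + x * PS (diffs aK) x = PS aB x"
proof -
  have "x * PS (diffs aK) x = PS (\<lambda>n. real n * aK n) x" by (rule x_diffs[OF b_aK x])
  also have "(\<lambda>n. real n * aK n) = (\<lambda>n. aB n - aK n)"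
  proof (rule ext)
    fix n
    define r where "r = real n"
    define A where "A = aA n"
    have d: "r + 1 \<noteq> 0" by (simp add: r_def)
    have "r * (A / (r+1)^2) = (A*(r+1) - A)/(r+1)^2" by (simp add: algebra_simps)
    also have "\<dots> = A*(r+1)/(r+1)^2 - A/(r+1)^2" by (simp add: diff_divide_distrib)
    also have "A*(r+1)/(r+1)^2 = A/(r+1)" using d by (simp add: power2_eq_square)
    finally show "real n * aK n = aB n - aK n"
      unfolding aB_def aK_def r_def A_def .
  qed
  also have "PS (\<lambda>n. aB n - aK n) x = PS aB x - PS aK x"
    by (rule PS_diff) (auto intro!: summ[OF b_aB x] summ[OF b_aK x])
  finally show ?thesis by simp
qed

lemma EL1:
  assumes x: "\<bar>x\<bar> < 1"
  shows "PS (diffs l1) x = 1 / (1 - x)"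
proof -
  have "diffs l1 = (\<lambda>n. 1)" by (rule ext) (simp add: diffs_def l1_def)
  then show ?thesis using suminf_geometric[of x] x by (simp add: PS_def)
qed

lemma EL2:
  assumes x: "\<bar>x\<bar> < 1"
  shows "x * PS (diffs l2) x = PS l1 x"
proof -
  have "x * PS (diffs l2) x = PS (\<lambda>n. real n * l2 n) x" by (rule x_diffs[OF b_l2 x])
  also have "(\<lambda>n. real n * l2 n) = l1" by (rule ext) (simp add: l1_def l2_def power2_eq_square)
  finally show ?thesis .
qed


lemmas inv_simps = divide_inverse inverse_mult_distrib power_inverse[symmetric] inverse_inverse_eq inverse_minus_eq

lemma inv_facts2:
  fixes w :: real assumes "1 + w \<noteq> 0" "1 - w \<noteq> 0"
  shows "inverse (1-w) * (1-w) = 1" "inverse (1+w) * (1+w) = 1" "inverse (2::real) * 2 = 1" "inverse (4::real) * 4 = 1"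
  using assms by auto

lemma inv_facts:
  fixes w :: real assumes "w \<noteq> 0" "1 + w \<noteq> 0" "1 - w \<noteq> 0"
  shows "inverse (1-w) * (1-w) = 1" "inverse (1+w) * (1+w) = 1" "inverse w * w = 1" "inverse (2::real) * 2 = 1" "inverse (4::real) * 4 = 1"
  using assms by auto

definition X :: "real \<Rightarrow> real" where "X w = 4*w/(1+w)^2"
definition dX :: "real \<Rightarrow> real" where "dX w = 4*(1-w)/(1+w)^3"

lemma X_deriv: "w > -1 \<Longrightarrow> (X has_real_derivative dX w) (at w)"
proof -
  assume w: "w > -1"
  then have nz: "1 + w \<noteq> 0" by auto
  have "1 + (w*w + w*2) = (1+w)*(1+w)" by (simp add: algebra_simps)
  then have nz2: "1 + (w*w + w*2) \<noteq> 0" using nz by simp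
  have "((\<lambda>w. 4*w/(1+w)^2) has_real_derivative (4*(1+w)^2 - 4*w*(2*(1+w)))/((1+w)^2*(1+w)^2)) (at w)"
    using nz nz2 by (auto intro!: derivative_eq_intros simp: power2_eq_square algebra_simps)
  moreover have "(4*(1+w)^2 - 4*w*(2*(1+w)))/((1+w)^2*(1+w)^2) = dX w"
  proof -
    have num: "4*(1+w)^2 - 4*w*(2*(1+w)) = 4*(1-w)*(1+w)" by (simp add: algebra_simps power2_eq_square)
    have den: "(1+w)^2*(1+w)^2 = (1+w)^3*(1+w)" by (simp add: algebra_simps power2_eq_square power3_eq_cube)
    show ?thesis unfolding num den dX_def using nz by simp
  qed
  moreover have "X = (\<lambda>w. 4*w/(1+w)^2)" by (rule ext) (simp add: X_def)
  ultimately show ?thesis by simp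
qed

lemma X_range: "0 \<le> w \<Longrightarrow> w < 1 \<Longrightarrow> 0 \<le> X w \<and> X w < 1"
proof -
  assume w: "0 \<le> w" "w < 1"
  have "0 < (1-w)^2" using w by simp
  then have "4*w < (1+w)^2" by (simp add: power2_eq_square algebra_simps)
  then show ?thesis using w by (simp add: X_def)
qed

lemma X_abs: "0 \<le> w \<Longrightarrow> w < 1 \<Longrightarrow> \<bar>X w\<bar> < 1" using X_range by fastforce

lemma one_minus_X: "w > -1 \<Longrightarrow> 1 - X w = (1-w)^2/(1+w)^2"
proof -
  assume "w > -1"
  then have nz: "(1+w)^2 \<noteq> 0" by simp
  have "1 - X w = ((1+w)^2 - 4*w)/(1+w)^2" unfolding X_def using nz by (simp add: field_simps)
  also have "(1+w)^2 - 4*w = (1-w)^2" by (simp add: algebra_simps power2_eq_square)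
  finally show ?thesis .
qed

lemma chainPS:
  assumes b: "\<And>n. \<bar>a n\<bar> \<le> M * (real n + 1)^2" and w: "0 \<le> w" "w < 1"
  shows "((\<lambda>w. PS a (X w)) has_real_derivative PS (diffs a) (X w) * dX w) (at w)"
  using DERIV_chain2[OF PS_deriv[OF b X_abs[OF w]] X_deriv] w by simp

lemma dq: "w > -1 \<Longrightarrow> ((\<lambda>w. (1-w)/(1+w)) has_real_derivative -2/(1+w)^2) (at w)"
  by (auto intro!: derivative_eq_intros simp: field_simps power2_eq_square)

lemma dln1: "w < 1 \<Longrightarrow> ((\<lambda>w. ln (1-w)) has_real_derivative -1/(1-w)) (at w)"
  by (auto intro!: derivative_eq_intros simp: field_simps)

lemma dln2: "w > -1 \<Longrightarrow> ((\<lambda>w. ln (1+w)) has_real_derivative 1/(1+w)) (at w)"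
  by (auto intro!: derivative_eq_intros simp: field_simps)

lemma const0:
  fixes g :: "real \<Rightarrow> real"
  assumes D: "\<And>w. 0 \<le> w \<Longrightarrow> w < 1 \<Longrightarrow> (g has_real_derivative d w) (at w)"
    and Z: "\<And>w. 0 < w \<Longrightarrow> w < 1 \<Longrightarrow> d w = 0" and w: "0 \<le> w" "w < 1"
  shows "g w = g 0"
proof (cases "w = 0")
  case False
  then have w0: "0 < w" using w by auto
  show ?thesis
  proof (rule DERIV_isconst2[of 0 w g w])
    show "continuous_on {0..w} g"
    proof (intro continuous_at_imp_continuous_on ballI)
      fix y assume "y \<in> {0..w}"
      then have "0 \<le> y" "y < 1" using w by auto
      then show "isCont g y" by (rule DERIV_isCont[OF D])
    qed
    show "\<And>x. 0 < x \<Longrightarrow> x < w \<Longrightarrow> DERIV g x :> 0"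
    proof -
      fix x :: real assume "0 < x" "x < w"
      then have "0 \<le> x" "0 < x" "x < 1" using w by auto
      then show "DERIV g x :> 0" using D[of x] Z[of x] by simp
    qed
  qed (use w0 in auto)
qed simp

lemma V0:
  assumes w: "0 \<le> w" "w < 1"
  shows "PS cc (X w) = (1+w)/(1-w)"
proof -
  define g where "g w = PS cc (X w) * ((1-w)/(1+w))" for w
  define d where "d w = PS (diffs cc) (X w) * dX w * ((1-w)/(1+w)) + (-2/(1+w)^2) * PS cc (X w)" for w
  have D: "(g has_real_derivative d w) (at w)" if "0 \<le> w" "w < 1" for w
    unfolding g_def d_def using that by (intro DERIV_mult chainPS[OF b_cc] dq) auto
  have Z: "d w = 0" if "0 < w" "w < 1" for w
  proof -
    define P where "P = PS cc (X w)"
    define P' where "P' = PS (diffs cc) (X w)"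
    have e: "P' = X w * P' + P / 2" using E0[OF X_abs] that unfolding P_def P'_def by simp
    then have "P = 2 * P' * (1 - X w)" by (simp add: algebra_simps)
    also have "1 - X w = (1-w)^2/(1+w)^2" using that by (simp add: one_minus_X)
    finally have p: "P = 2 * P' * ((1-w)^2/(1+w)^2)" .
    have "d w = P' * dX w * ((1-w)/(1+w)) + (-2/(1+w)^2) * (2 * P' * ((1-w)^2/(1+w)^2))"
      unfolding d_def P_def[symmetric] P'_def[symmetric] p ..
    also have "\<dots> = 0" using that by (simp add: dX_def field_simps power2_eq_square power3_eq_cube)
    finally show ?thesis .
  qed
  have "g w = g 0" by (rule const0[OF D Z w]) auto
  also have "g 0 = 1" by (simp add: g_def X_def PS_zero cc0)
  finally show ?thesis using w by (simp add: g_def field_simps)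
qed


lemma VA:
  assumes w: "0 \<le> w" "w < 1"
  shows "PS aA (X w) = -2*(1+w)/(1-w)*ln(1-w)"
proof -
  define g where "g w = PS aA (X w) * ((1-w)/(1+w)) + 2*ln(1-w)" for w
  define d where "d w = (PS (diffs aA) (X w) * dX w * ((1-w)/(1+w)) + (-2/(1+w)^2) * PS aA (X w)) + 2*(-1/(1-w))" for w
  have D: "(g has_real_derivative d w) (at w)" if "0 \<le> w" "w < 1" for w
    unfolding g_def d_def using that by (intro DERIV_add DERIV_mult chainPS[OF b_aA] dq DERIV_cmult dln1) auto
  have Z: "d w = 0" if "0 < w" "w < 1" for w
  proof -
    define P where "P = PS aA (X w)"
    define P' where "P' = PS (diffs aA) (X w)"
    have e: "X w * P' = X w * (X w * P') + X w * P / 2 + (1+w)/(1-w) - 1"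
      using EA[OF X_abs] V0 that unfolding P_def P'_def by simp
    have X0: "X w \<noteq> 0" using that by (simp add: X_def)
    have X1: "1 - X w = (1-w)^2/(1+w)^2" using that by (simp add: one_minus_X)
    have "X w * (1 - X w) * P' = X w * P / 2 + (1+w)/(1-w) - 1" using e by (simp add: algebra_simps)
    then have p: "P' = (X w * P / 2 + (1+w)/(1-w) - 1) / (X w * ((1-w)^2/(1+w)^2))"
      using X0 that unfolding X1 by (simp add: field_simps)
    have "d w = (X w * P / 2 + (1+w)/(1-w) - 1) / (X w * ((1-w)^2/(1+w)^2)) * dX w * ((1-w)/(1+w)) + (-2/(1+w)^2) * P + 2*(-1/(1-w))"
      unfolding d_def P_def[symmetric] P'_def[symmetric] p ..
    also have "\<dots> = 0"
    proof -
      have nz: "w \<noteq> 0" "1 + w \<noteq> 0" "1 - w \<noteq> 0" using that by auto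
      show ?thesis unfolding X_def dX_def using inv_facts[OF nz] by (simp only: inv_simps) algebra
    qed
    finally show ?thesis .
  qed
  have "g w = g 0" by (rule const0[OF D Z w]) auto
  also have "g 0 = 0" by (simp add: g_def X_def PS_zero aA0)
  finally show ?thesis using w by (simp add: g_def field_simps)
qed

lemma VL1:
  assumes w: "0 \<le> w" "w < 1"
  shows "PS l1 w = - ln (1-w)"
proof -
  define g where "g w = PS l1 w + ln(1-w)" for w
  define d where "d w = PS (diffs l1) w + -1/(1-w)" for w
  have D: "(g has_real_derivative d w) (at w)" if "0 \<le> w" "w < 1" for w
    unfolding g_def d_def using that by (intro DERIV_add PS_deriv[OF b_l1] dln1) auto
  have Z: "d w = 0" if "0 < w" "w < 1" for w
    using EL1[of w] that by (simp add: d_def)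
  have "g w = g 0" by (rule const0[OF D Z w]) auto
  also have "g 0 = 0" by (simp add: g_def PS_zero l1_def)
  finally show ?thesis by (simp add: g_def)
qed

lemma VF:
  assumes w: "0 \<le> w" "w < 1"
  shows "PS aF (X w) = 2 * PS l2 w"
proof -
  define g where "g w = PS aF (X w) - 2 * PS l2 w" for w
  define d where "d w = PS (diffs aF) (X w) * dX w - 2 * PS (diffs l2) w" for w
  have D: "(g has_real_derivative d w) (at w)" if "0 \<le> w" "w < 1" for w
    unfolding g_def d_def using that by (intro DERIV_diff chainPS[OF b_aF] DERIV_cmult PS_deriv[OF b_l2]) auto
  have Z: "d w = 0" if "0 < w" "w < 1" for w
  proof -
    have X0: "X w \<noteq> 0" using that by (simp add: X_def)
    have "X w * PS (diffs aF) (X w) = -2*(1+w)/(1-w)*ln(1-w)"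
      using EF[OF X_abs] VA that by simp
    then have p1: "PS (diffs aF) (X w) = (-2*(1+w)/(1-w)*ln(1-w)) / X w"
      using X0 by (metis nonzero_mult_div_cancel_left)
    have "w * PS (diffs l2) w = - ln(1-w)" using EL2[of w] VL1[of w] that by simp
    then have p2: "PS (diffs l2) w = - ln(1-w) / w" using that by (metis nonzero_mult_div_cancel_left less_irrefl)
    have nz: "w \<noteq> 0" "1 + w \<noteq> 0" "1 - w \<noteq> 0" using that by auto
    show ?thesis unfolding d_def p1 p2 unfolding X_def dX_def using inv_facts[OF nz] by (simp only: inv_simps) algebra
  qed
  have "g w = g 0" by (rule const0[OF D Z w]) auto
  also have "g 0 = 0" by (simp add: g_def PS_zero X_def aF_def l2_def)
  finally show ?thesis by (simp add: g_def)
qed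

definition RB :: "real \<Rightarrow> real" where "RB w = 8*ln(1-w)/(1+w) + 4*ln(1+w) - 4*ln(1-w)"
definition RK0 :: "real \<Rightarrow> real" where "RK0 w = 16*ln(1-w)/(1+w) + 8*ln(1+w) - 8*ln(1-w) - 4*(ln(1+w)*ln(1+w))"

lemma dRB: "-1 < w \<Longrightarrow> w < 1 \<Longrightarrow> (RB has_real_derivative -8*ln(1-w)/(1+w)^2) (at w)"
proof -
  assume w: "-1 < w" "w < 1"
  have "((\<lambda>w. 8*ln(1-w)/(1+w) + 4*ln(1+w) - 4*ln(1-w)) has_real_derivative
     (8*(-1/(1-w))*(1+w) - 8*ln(1-w)*1)/((1+w)*(1+w)) + 4*(1/(1+w)) - 4*(-1/(1-w))) (at w)"
    using w by (intro DERIV_diff DERIV_add DERIV_divide DERIV_cmult dln1 dln2) (auto intro!: derivative_eq_intros)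
  moreover have "(8*(-1/(1-w))*(1+w) - 8*ln(1-w)*1)/((1+w)*(1+w)) + 4*(1/(1+w)) - 4*(-1/(1-w)) = -8*ln(1-w)/(1+w)^2"
  proof -
    have nz: "1 + w \<noteq> 0" "1 - w \<noteq> 0" using w by auto
    show ?thesis using inv_facts2[OF nz] by (simp only: inv_simps) algebra
  qed
  moreover have "RB = (\<lambda>w. 8*ln(1-w)/(1+w) + 4*ln(1+w) - 4*ln(1-w))" by (rule ext) (simp add: RB_def)
  ultimately show ?thesis by simp
qed


lemma dRK0: "-1 < w \<Longrightarrow> w < 1 \<Longrightarrow> (RK0 has_real_derivative (-16*ln(1-w)/(1+w)^2 - 8*ln(1+w)/(1+w))) (at w)"
proof -
  assume w: "-1 < w" "w < 1"
  have d1: "((\<lambda>w. 16*ln(1-w)/(1+w) + 8*ln(1+w) - 8*ln(1-w) - 4*(ln(1+w)*ln(1+w))) has_real_derivative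
     (16*(-1/(1-w))*(1+w) - 16*ln(1-w)*1)/((1+w)*(1+w)) + 8*(1/(1+w)) - 8*(-1/(1-w))
       - 4*(1/(1+w)*ln(1+w) + 1/(1+w)*ln(1+w))) (at w)"
    using w by (intro DERIV_diff DERIV_add DERIV_divide DERIV_cmult DERIV_mult dln1 dln2) (auto intro!: derivative_eq_intros)
  have e1: "(16*(-1/(1-w))*(1+w) - 16*ln(1-w)*1)/((1+w)*(1+w)) + 8*(1/(1+w)) - 8*(-1/(1-w))
       - 4*(1/(1+w)*ln(1+w) + 1/(1+w)*ln(1+w)) = -16*ln(1-w)/(1+w)^2 - 8*ln(1+w)/(1+w)"
  proof -
    have nz: "1 + w \<noteq> 0" "1 - w \<noteq> 0" using w by auto
    show ?thesis using inv_facts2[OF nz] by (simp only: inv_simps) algebra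
  qed
  have r1: "RK0 = (\<lambda>w. 16*ln(1-w)/(1+w) + 8*ln(1+w) - 8*ln(1-w) - 4*(ln(1+w)*ln(1+w)))" by (rule ext) (simp add: RK0_def)
  show ?thesis unfolding r1 using d1 unfolding e1 .
qed

lemma dsq: "((\<lambda>w. w^2) has_real_derivative 2*w) (at (w::real))"
proof -
  have "((\<lambda>w. w*w) has_real_derivative 1*w + 1*w) (at w)" by (rule DERIV_mult[OF DERIV_ident DERIV_ident])
  moreover have "(\<lambda>w::real. w^2) = (\<lambda>w. w*w)" by (rule ext) (simp add: power2_eq_square)
  ultimately show ?thesis by simp
qed

lemma VB:
  assumes w: "0 \<le> w" "w < 1"
  shows "X w * PS aB (X w) = RB w"
proof -
  define g where "g w = X w * PS aB (X w) - RB w" for w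
  define d where "d w = (dX w * PS aB (X w) + PS (diffs aB) (X w) * dX w * X w) - (-8*ln(1-w)/(1+w)^2)" for w
  have D: "(g has_real_derivative d w) (at w)" if "0 \<le> w" "w < 1" for w
    unfolding g_def d_def using that by (intro DERIV_diff DERIV_mult X_deriv chainPS[OF b_aB] dRB) auto
  have Z: "d w = 0" if "0 < w" "w < 1" for w
  proof -
    have "dX w * PS aB (X w) + PS (diffs aB) (X w) * dX w * X w = dX w * (PS aB (X w) + X w * PS (diffs aB) (X w))"
      by (simp add: algebra_simps)
    also have "\<dots> = dX w * (-2*(1+w)/(1-w)*ln(1-w))" using EB[OF X_abs] VA that by simp
    finally have e: "dX w * PS aB (X w) + PS (diffs aB) (X w) * dX w * X w = dX w * (-2*(1+w)/(1-w)*ln(1-w))" .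
    have nz: "w \<noteq> 0" "1 + w \<noteq> 0" "1 - w \<noteq> 0" using that by auto
    show ?thesis unfolding d_def e unfolding dX_def using inv_facts[OF nz] by (simp only: inv_simps) algebra
  qed
  have "g w = g 0" by (rule const0[OF D Z w]) auto
  also have "g 0 = 0" by (simp add: g_def X_def RB_def)
  finally show ?thesis by (simp add: g_def)
qed

lemma ln_1msq: "0 \<le> (w::real) \<Longrightarrow> w < 1 \<Longrightarrow> ln (1 - w^2) = ln (1-w) + ln (1+w)"
proof -
  assume w: "0 \<le> w" "w < 1"
  have "1 - w^2 = (1-w)*(1+w)" by (simp add: algebra_simps power2_eq_square)
  moreover have "ln ((1-w)*(1+w)) = ln(1-w) + ln(1+w)" by (rule ln_mult_pos) (use w in auto)
  ultimately show ?thesis by simp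
qed

lemma VK:
  assumes w: "0 \<le> w" "w < 1"
  shows "X w * PS aK (X w) = -2 * PS l2 (w^2) + RK0 w"
proof -
  define g where "g w = X w * PS aK (X w) - (-2 * PS l2 (w^2) + RK0 w)" for w
  define d where "d w = (dX w * PS aK (X w) + PS (diffs aK) (X w) * dX w * X w)
       - (-2 * (PS (diffs l2) (w^2) * (2*w)) + (-16*ln(1-w)/(1+w)^2 - 8*ln(1+w)/(1+w)))" for w
  have D: "(g has_real_derivative d w) (at w)" if "0 \<le> w" "w < 1" for w
  proof -
    have w2: "\<bar>w^2\<bar> < 1" using that by (simp add: abs_square_less_1)
    show ?thesis
      unfolding g_def d_def using that
      by (intro DERIV_diff DERIV_add DERIV_mult X_deriv chainPS[OF b_aK] dRK0 DERIV_cmult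
            DERIV_chain2[OF PS_deriv[OF b_l2 w2] dsq]) auto
  qed
  have Z: "d w = 0" if "0 < w" "w < 1" for w
  proof -
    have X0: "X w \<noteq> 0" using that by (simp add: X_def)
    have "dX w * PS aK (X w) + PS (diffs aK) (X w) * dX w * X w = dX w * (PS aK (X w) + X w * PS (diffs aK) (X w))"
      by (simp add: algebra_simps)
    also have "\<dots> = dX w * PS aB (X w)" using EK[OF X_abs] that by simp
    also have "PS aB (X w) = X w * PS aB (X w) / X w" using X0 by simp
    also have "\<dots> = RB w / X w" using VB that by simp
    finally have e: "dX w * PS aK (X w) + PS (diffs aK) (X w) * dX w * X w = dX w * (RB w / X w)" .
    have w2: "\<bar>w^2\<bar> < 1" "0 \<le> w^2" "w^2 < 1" using that by (simp_all add: abs_square_less_1 power_less_one_iff)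
    have h: "w^2 * PS (diffs l2) (w^2) = - (ln (1-w) + ln (1+w))"
      using EL2[OF w2(1)] VL1[OF w2(2) w2(3)] ln_1msq[of w] that by simp
    have "PS (diffs l2) (w^2) = w^2 * PS (diffs l2) (w^2) / w^2" using that by simp
    also have "\<dots> = - (ln (1-w) + ln (1+w)) / w^2" by (simp only: h)
    finally have e2: "PS (diffs l2) (w^2) = - (ln (1-w) + ln (1+w)) / w^2" .
    have nz: "w \<noteq> 0" "1 + w \<noteq> 0" "1 - w \<noteq> 0" using that by auto
    show ?thesis unfolding d_def e e2 unfolding RB_def X_def dX_def using inv_facts[OF nz] by (simp only: inv_simps) algebra
  qed
  have "g w = g 0" by (rule const0[OF D Z w]) auto
  also have "g 0 = 0" by (simp add: g_def X_def RK0_def PS_zero l2_def)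
  finally show ?thesis by (simp add: g_def)
qed


lemma abel_cont:
  assumes nn: "\<And>n. a n \<ge> 0" and sa: "summable a"
  shows "(PS a \<longlongrightarrow> suminf a) (at_left 1)"
proof -
  have u: "uniform_limit {0..1} (\<lambda>n x. \<Sum>i<n. a i * x^i) (\<lambda>x. \<Sum>i. a i * x^i) sequentially"
  proof (rule Weierstrass_m_test[OF _ sa])
    fix n and x :: real assume "x \<in> {0..1}"
    then have "x^n \<le> 1" "0 \<le> x^n" by (auto intro: power_le_one)
    then show "norm (a n * x^n) \<le> a n" using nn[of n] by (simp add: abs_mult mult_left_le)
  qed
  have c: "continuous_on {0..1} (\<lambda>x. \<Sum>i. a i * x^i)"
  proof (rule uniform_limit_theorem[OF _ u])
    show "\<forall>\<^sub>F n in sequentially. continuous_on {0..1} (\<lambda>x. \<Sum>i<n. a i * x ^ i)"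
      by (intro always_eventually allI continuous_intros)
  qed simp
  then have "((\<lambda>x. \<Sum>i. a i * x^i) \<longlongrightarrow> (\<Sum>i. a i * 1^i)) (at 1 within {0..1})"
    using c[unfolded continuous_on_def, rule_format, of 1] by simp
  then have "((\<lambda>x. \<Sum>i. a i * x^i) \<longlongrightarrow> suminf a) (at_left 1)"
    by (simp add: at_within_Icc_at_left)
  moreover have "PS a = (\<lambda>x. \<Sum>i. a i * x^i)" by (rule ext) (simp add: PS_def)
  ultimately show ?thesis by simp
qed

lemma abel_bdd:
  assumes nn: "\<And>n. a n \<ge> 0" and b: "\<And>n. \<bar>a n\<bar> \<le> M * (real n + 1)^2"
    and Yl: "filterlim Y (at_left 1) (at_left (1::real))"
    and lim: "((\<lambda>w. PS a (Y w)) \<longlongrightarrow> L) (at_left 1)"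
  shows "a sums L"
proof -
  from Yl have tY: "(Y \<longlongrightarrow> 1) (at_left 1)" and ev1: "eventually (\<lambda>w. Y w \<in> {..<1} \<and> Y w \<noteq> 1) (at_left 1)"
    by (simp_all add: filterlim_at)
  have ev2: "eventually (\<lambda>w. Y w > 0) (at_left 1)" using order_tendstoD(1)[OF tY, of 0] by simp
  have ev: "eventually (\<lambda>w. 0 \<le> Y w \<and> Y w < 1) (at_left (1::real))"
    using ev1 ev2 by eventually_elim auto
  have part: "sum a {..<N} \<le> L" for N
  proof -
    have t1: "((\<lambda>w. \<Sum>n<N. a n * Y w^n) \<longlongrightarrow> (\<Sum>n<N. a n * 1^n)) (at_left 1)"
      by (intro tendsto_intros tY)
    have e1: "eventually (\<lambda>w. (\<Sum>n<N. a n * Y w^n) \<le> PS a (Y w)) (at_left 1)"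
      using ev
    proof eventually_elim
      case (elim w)
      then have "\<bar>Y w\<bar> < 1" by auto
      then show ?case unfolding PS_def
        using elim by (intro sum_le_suminf summ[OF b]) (auto intro!: mult_nonneg_nonneg nn)
    qed
    have "(\<Sum>n<N. a n * 1^n) \<le> L" by (rule tendsto_le[OF _ lim t1 e1]) simp
    then show ?thesis by simp
  qed
  have sa: "summable a" by (rule summableI_nonneg_bounded[OF nn part])
  have le1: "suminf a \<le> L" by (rule suminf_le_const[OF sa part])
  have e2: "eventually (\<lambda>w. PS a (Y w) \<le> suminf a) (at_left 1)"
    using ev
  proof eventually_elim
    case (elim w)
    then have "\<bar>Y w\<bar> < 1" by auto
    have "a n * Y w^n \<le> a n" for n
      using elim nn[of n] by (intro mult_left_le power_le_one) auto
    then show ?case unfolding PS_def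
      by (intro suminf_le summ[OF b \<open>\<bar>Y w\<bar> < 1\<close>] sa)
  qed
  have le2: "L \<le> suminf a" by (rule tendsto_le[OF _ tendsto_const lim e2]) simp
  from le1 le2 have "suminf a = L" by simp
  then show ?thesis using summable_sums[OF sa] by simp
qed

lemma ev01': "eventually (\<lambda>x. x \<in> {0<..<1}) (at_left (1::real))"
  by (rule eventually_at_left_real) simp

lemma X_fl: "filterlim X (at_left 1) (at_left (1::real))"
  unfolding filterlim_at
proof
  show "eventually (\<lambda>w. X w \<in> {..<1} \<and> X w \<noteq> 1) (at_left 1)"
    using ev01'
  proof eventually_elim
    case (elim w)
    then have "X w < 1" using X_range[of w] by auto
    then show ?case by auto
  qed
  show "(X \<longlongrightarrow> 1) (at_left 1)" unfolding X_def by real_asymp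
qed

lemma sq_fl: "filterlim (\<lambda>w. w^2) (at_left 1) (at_left (1::real))"
  unfolding filterlim_at
proof
  show "eventually (\<lambda>w. w^2 \<in> {..<1} \<and> w^2 \<noteq> (1::real)) (at_left 1)"
    using ev01'
  proof eventually_elim
    case (elim w)
    then have "w*w < 1*1" by (intro mult_strict_mono) auto
    then have "w^2 < (1::real)" by (simp add: power2_eq_square)
    then show ?case by auto
  qed
  show "((\<lambda>w. w^2) \<longlongrightarrow> (1::real)) (at_left 1)" by real_asymp
qed

lemma l2_sums: "l2 sums (pi^2/6)"
proof -
  have "(\<lambda>n. l2 (Suc n)) sums (pi^2/6)"
    using inverse_squares_sums by (simp add: l2_def add.commute)
  then have "l2 sums (pi^2/6 + l2 0)" by (rule sums_Suc)
  then show ?thesis by (simp add: l2_def)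
qed

lemma l2_nonneg: "l2 n \<ge> 0" by (simp add: l2_def)

lemma l2_lim: "(PS l2 \<longlongrightarrow> pi^2/6) (at_left 1)"
  using abel_cont[OF l2_nonneg sums_summable[OF l2_sums]] sums_unique[OF l2_sums] by simp

lemma ev01: "eventually (\<lambda>w. 0 < w \<and> w < (1::real)) (at_left 1)"
  using ev01' by eventually_elim auto

lemma aF_sums: "aF sums (pi^2/3)"
proof (rule abel_bdd[OF aF_nonneg b_aF X_fl])
  have "((\<lambda>w. 2 * PS l2 w) \<longlongrightarrow> 2 * (pi^2/6)) (at_left 1)" by (intro tendsto_intros l2_lim)
  moreover have "eventually (\<lambda>w. 2 * PS l2 w = PS aF (X w)) (at_left 1)"
    using ev01 by eventually_elim (simp add: VF)
  ultimately show "((\<lambda>w. PS aF (X w)) \<longlongrightarrow> pi^2/3) (at_left 1)"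
    by (simp add: tendsto_cong)
qed

lemma aB_sums: "aB sums (4 * ln 2)"
proof (rule abel_bdd[OF aB_nonneg b_aB X_fl])
  have r: "(RB \<longlongrightarrow> 4 * ln 2) (at_left 1)" unfolding RB_def by real_asymp
  have x: "(X \<longlongrightarrow> 1) (at_left 1)" using X_fl by (simp add: filterlim_at)
  have "((\<lambda>w. RB w / X w) \<longlongrightarrow> 4 * ln 2 / 1) (at_left 1)" by (intro tendsto_intros r x) simp
  moreover have "eventually (\<lambda>w. RB w / X w = PS aB (X w)) (at_left 1)"
    using ev01
  proof eventually_elim
    case (elim w)
    then have "X w \<noteq> 0" by (simp add: X_def)
    then show ?case using VB[of w] elim by (simp add: field_simps)
  qed
  ultimately show "((\<lambda>w. PS aB (X w)) \<longlongrightarrow> 4 * ln 2) (at_left 1)"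
    by (simp add: tendsto_cong)
qed

lemma aK_sums: "aK sums (-2 * (pi^2/6) + (8 * ln 2 - 4 * (ln 2 * ln 2)))"
proof (rule abel_bdd[OF aK_nonneg b_aK X_fl])
  have r: "(RK0 \<longlongrightarrow> 8 * ln 2 - 4 * (ln 2 * ln 2)) (at_left 1)" unfolding RK0_def by real_asymp
  have l: "((\<lambda>w. PS l2 (w^2)) \<longlongrightarrow> pi^2/6) (at_left 1)"
    by (rule filterlim_compose[OF l2_lim sq_fl])
  have x: "(X \<longlongrightarrow> 1) (at_left 1)" using X_fl by (simp add: filterlim_at)
  have "((\<lambda>w. (-2 * PS l2 (w^2) + RK0 w) / X w) \<longlongrightarrow> (-2 * (pi^2/6) + (8 * ln 2 - 4 * (ln 2 * ln 2))) / 1) (at_left 1)"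
    by (intro tendsto_intros r x l) simp
  moreover have "eventually (\<lambda>w. (-2 * PS l2 (w^2) + RK0 w) / X w = PS aK (X w)) (at_left 1)"
    using ev01
  proof eventually_elim
    case (elim w)
    then have "X w \<noteq> 0" by (simp add: X_def)
    then show ?case using VK[of w] elim by (simp add: field_simps)
  qed
  ultimately show "((\<lambda>w. PS aK (X w)) \<longlongrightarrow> -2 * (pi^2/6) + (8 * ln 2 - 4 * (ln 2 * ln 2))) (at_left 1)"
    by (simp add: tendsto_cong)
qed

theorem mainTheorem5:
  shows "(\<lambda>m. let n = m + 1 in
            (harm n :: real) * real (2 * n choose n)
              / (real n * (real n + 1)^2 * 2 ^ (2 * n)))
         sums (2 * pi^2 / 3 + 4 * (ln 2)^2 - 12 * ln 2)"
proof -
  have s: "(\<lambda>n. aF n - aB n - aK n) sums (pi^2/3 - 4 * ln 2 - (-2 * (pi^2/6) + (8 * ln 2 - 4 * (ln 2 * ln 2))))"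
    by (intro sums_diff aF_sums aB_sums aK_sums)
  have f0: "aF 0 - aB 0 - aK 0 = 0" by (simp add: aF_def aB_def aK_def aA0)
  have v: "pi^2/3 - 4 * ln 2 - (-2 * (pi^2/6) + (8 * ln 2 - 4 * (ln 2 * ln 2)))
      = 2 * pi^2 / 3 + 4 * (ln 2)^2 - 12 * ln (2::real)"
    by (simp add: power2_eq_square)
  have s2: "(\<lambda>n. aF n - aB n - aK n) sums (2 * pi^2 / 3 + 4 * (ln 2)^2 - 12 * ln (2::real) + (aF 0 - aB 0 - aK 0))"
    using s unfolding v f0 by simp
  have iff: "(\<lambda>n. aF (Suc n) - aB (Suc n) - aK (Suc n)) sums (2 * pi^2 / 3 + 4 * (ln 2)^2 - 12 * ln (2::real))
     \<longleftrightarrow> (\<lambda>n. aF n - aB n - aK n) sums (2 * pi^2 / 3 + 4 * (ln 2)^2 - 12 * ln (2::real) + (aF 0 - aB 0 - aK 0))"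
    by (rule sums_Suc_iff)
  have "(\<lambda>n. aF (Suc n) - aB (Suc n) - aK (Suc n)) sums (2 * pi^2 / 3 + 4 * (ln 2)^2 - 12 * ln (2::real))"
    using iff s2 by blast
  moreover have "(\<lambda>n. aF (Suc n) - aB (Suc n) - aK (Suc n)) = (\<lambda>m. let n = m + 1 in
            (harm n :: real) * real (2 * n choose n)
              / (real n * (real n + 1)^2 * 2 ^ (2 * n)))"
  proof (rule ext)
    fix m
    define n where "n = Suc m"
    define r where "r = real n"
    define h where "h = (harm n :: real)"
    define C where "C = real (2 * n choose n)"
    define q where "q = (4::real)^n"
    have r0: "r \<noteq> 0" "r + 1 \<noteq> 0" "q \<noteq> 0" by (simp_all add: r_def n_def q_def)
    have q2: "(2::real) ^ (2 * n) = q" by (simp add: q_def power_mult)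
    have i: "inverse r * r = 1" "inverse (r+1) * (r+1) = 1" "inverse q * q = 1" using r0 by auto
    have "aF n - aB n - aK n = C / q * h / r - C / q * h / (r + 1) - C / q * h / (r+1)^2"
      by (simp add: aF_def aB_def aK_def aA_def cc_def r_def h_def C_def q_def)
    also have "\<dots> = h * C / (r * (r + 1)^2 * q)"
      using i by (simp only: inv_simps) algebra
    finally show "aF (Suc m) - aB (Suc m) - aK (Suc m) = (let n = m + 1 in
            (harm n :: real) * real (2 * n choose n)
              / (real n * (real n + 1)^2 * 2 ^ (2 * n)))"
      unfolding Let_def using q2 by (simp add: n_def r_def h_def C_def)
  qed
  ultimately show ?thesis by simp
qed

end
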